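(* Let $\mathcal{B}\subseteq\mathcal{P}(X)$ be a countable admissible algebra, let $\mathcal{S}\subseteq\mathcal{N}(\mathcal{B})$ be a countable collection and let $\varepsilon>0$. Then there is a set $A\subseteq X$ such that: (i) the algebra generated by $\mathcal{B}\cup\{A\}$ is admissible; (ii) for every $\{B_k\}_{k\in\omega}\in\mathcal{S}$ there is $k_0\in\omega$ such that $(B_{k_0})_{|n}\subseteq A_{|n}$ for all but finitely many $n\in\omega$; (iii) $\mu(A)\le\varepsilon$.
   Context: $\omega=\{0,1,2,\dots\}$, $2^\omega$ is the Cantor set, $\lambda$ is the usual product probability measure on $2^\omega$, and $\mathrm{Clop}(2^\omega)$ is the algebra of clopen subsets of $2^\omega$. Let $X=\omega\times 2^\omega$. For $B\subseteq X$ and $n\in\omega$, $B_{|n}=\{t\in 2^\omega:(n,t)\in B\}$. A set $B\subseteq X$ is admissible if $B_{|n}\in\mathrm{Clop}(2^\omega)$ for all $n\in\omega$ and $\lim_n\lambda(B_{|n})$ exists; in that case $\mu(B):=\lim_n\lambda(B_{|n})$. An algebra of subsets of $X$ is admissible if all its elements are admissible. For an admissible algebra $\mathcal{B}$, $\mathcal{N}(\mathcal{B})$ is the collection of all decreasing sequences $\{B_k\}_{k\in\omega}$ in $\mathcal{B}$ with $\lim_k\mu(B_k)=0$. *)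

theory Defs
  imports "HOL-Probability.Probability"
begin

(* The Cantor set 2^omega is the type nat => bool with the product topology
   (bool carries its discrete order topology). *)
type_synonym cantor = "nat \<Rightarrow> bool"

definition Clop :: "cantor set set" where
  "Clop = {A. open A \<and> closed A}"

definition cantor_measure :: "cantor measure" where
  "cantor_measure = (\<Pi>\<^sub>M i\<in>(UNIV::nat set). measure_pmf (bernoulli_pmf (1/2)))"

definition lam :: "cantor set \<Rightarrow> real" where
  "lam A = measure cantor_measure A"

(* X = omega x 2^omega; the n-th slice B_{|n} *)
definition slice :: "(nat \<times> cantor) set \<Rightarrow> nat \<Rightarrow> cantor set" where
  "slice B n = {t. (n, t) \<in> B}"

definition admissible :: "(nat \<times> cantor) set \<Rightarrow> bool" where
  "admissible B \<longleftrightarrow> (\<forall>n. slice B n \<in> Clop) \<and> convergent (\<lambda>n. lam (slice B n))"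

definition mu :: "(nat \<times> cantor) set \<Rightarrow> real" where
  "mu B = lim (\<lambda>n. lam (slice B n))"

definition admissible_algebra :: "(nat \<times> cantor) set set \<Rightarrow> bool" where
  "admissible_algebra \<B> \<longleftrightarrow> algebra UNIV \<B> \<and> (\<forall>B\<in>\<B>. admissible B)"

definition gen_algebra :: "(nat \<times> cantor) set set \<Rightarrow> (nat \<times> cantor) set set" where
  "gen_algebra G = \<Inter>{M. algebra UNIV M \<and> G \<subseteq> M}"

definition Nseq :: "(nat \<times> cantor) set set \<Rightarrow> (nat \<Rightarrow> (nat \<times> cantor) set) set" where
  "Nseq \<B> = {Bs. (\<forall>k. Bs k \<in> \<B>) \<and> decseq Bs \<and> (\<lambda>k. mu (Bs k)) \<longlonglongrightarrow> 0}"

end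

theory Submission imports Defs begin
instance bool :: second_countable_topology
proof
  show "\<exists>B::bool set set. countable B \<and> open = generate_topology B"
    by (intro exI[of _ "range lessThan \<union> range greaterThan"]) (auto simp: open_bool_def)
qed

lemma sets_cm: "sets cantor_measure = sets (borel :: cantor measure)"
proof -
  have "sets cantor_measure = sets (Pi\<^sub>M UNIV (\<lambda>i::nat. borel::bool measure))"
    unfolding cantor_measure_def
    by (rule sets_PiM_cong) (auto simp: sets_borel_eq_count_space)
  also have "\<dots> = sets borel" by (rule sets_PiM_equal_borel)
  finally show ?thesis .
qed

lemma prob_cm: "prob_space cantor_measure"
  unfolding cantor_measure_def
  by (intro prob_space_PiM) (simp add: prob_space_measure_pmf)

interpretation cm: prob_space cantor_measure by (rule prob_cm)

lemma clop_sets: "A \<in> Clop \<Longrightarrow> A \<in> sets cantor_measure"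
  unfolding Clop_def sets_cm by auto

lemma clop_Int: "A \<in> Clop \<Longrightarrow> B \<in> Clop \<Longrightarrow> A \<inter> B \<in> Clop"
  unfolding Clop_def by auto
lemma clop_Un: "A \<in> Clop \<Longrightarrow> B \<in> Clop \<Longrightarrow> A \<union> B \<in> Clop"
  unfolding Clop_def by auto
lemma clop_Diff: "A \<in> Clop \<Longrightarrow> B \<in> Clop \<Longrightarrow> A - B \<in> Clop"
  unfolding Clop_def by (auto intro: open_Diff closed_Diff)
lemma clop_empty: "{} \<in> Clop"
  unfolding Clop_def by auto
lemma clop_UN: "finite I \<Longrightarrow> (\<And>i. i \<in> I \<Longrightarrow> F i \<in> Clop) \<Longrightarrow> (\<Union>i\<in>I. F i) \<in> Clop"
  unfolding Clop_def by (auto intro: open_UN closed_UN)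

lemma lam_nonneg: "0 \<le> lam A" unfolding lam_def by simp
lemma lam_mono: "A \<subseteq> B \<Longrightarrow> B \<in> Clop \<Longrightarrow> lam A \<le> lam B"
  unfolding lam_def by (intro cm.finite_measure_mono) (auto intro: clop_sets)
lemma lam_Un_le: "A \<in> Clop \<Longrightarrow> B \<in> Clop \<Longrightarrow> lam (A \<union> B) \<le> lam A + lam B"
  unfolding lam_def by (intro measure_subadditive) (auto intro: clop_sets)
lemma lam_UN_le: "finite I \<Longrightarrow> (\<And>i. i \<in> I \<Longrightarrow> F i \<in> Clop) \<Longrightarrow> lam (\<Union>i\<in>I. F i) \<le> (\<Sum>i\<in>I. lam (F i))"
  unfolding lam_def by (intro cm.finite_measure_subadditive_finite) (auto intro: clop_sets)
lemma lam_split: "A \<in> Clop \<Longrightarrow> C \<in> Clop \<Longrightarrow> D \<in> Clop \<Longrightarrow>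
   lam ((C \<inter> A) \<union> (D - A)) = lam (C \<inter> A) + lam D - lam (D \<inter> A)"
proof -
  assume a: "A \<in> Clop" "C \<in> Clop" "D \<in> Clop"
  have "lam ((C \<inter> A) \<union> (D - A)) = lam (C \<inter> A) + lam (D - A)"
    unfolding lam_def using a by (intro cm.finite_measure_Union) (auto intro!: clop_sets clop_Int clop_Diff)
  moreover have "lam (D - A) = lam (D - (D \<inter> A))" by (simp add: Diff_Int)
  moreover have "lam (D - (D \<inter> A)) = lam D - lam (D \<inter> A)"
    unfolding lam_def using a by (intro cm.finite_measure_Diff) (auto intro!: clop_sets clop_Int)
  ultimately show ?thesis by simp
qed

lemma geom_sum: "(\<Sum>i\<in>{m..<m+K}. (1/2::real)^i) = 2*(1/2)^m - 2*(1/2)^(m+K)"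
proof (induction K)
  case (Suc K)
  have "(\<Sum>i\<in>{m..<m+Suc K}. (1/2::real)^i) = (\<Sum>i\<in>{m..<m+K}. (1/2::real)^i) + (1/2)^(m+K)"
    by simp
  also have "\<dots> = 2*(1/2)^m - 2*(1/2)^(m+Suc K)" using Suc by simp
  finally show ?case .
qed simp

lemma geom_bound:
  assumes "finite F" "\<forall>i\<in>F. m \<le> i"
  shows "(\<Sum>i\<in>F. (1/2::real)^i) \<le> 2*(1/2)^m"
proof -
  obtain K where K: "F \<subseteq> {m..<m+K}"
  proof -
    have "F \<subseteq> {m..<m + Suc (if F = {} then 0 else Max F)}"
      using assms by (auto dest: Max_ge)
    then show ?thesis using that by blast
  qed
  have "(\<Sum>i\<in>F. (1/2::real)^i) \<le> (\<Sum>i\<in>{m..<m+K}. (1/2::real)^i)"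
    by (rule sum_mono2) (use K in auto)
  also have "\<dots> \<le> 2*(1/2)^m" unfolding geom_sum by simp
  finally show ?thesis .
qed

lemma conv_approx:
  fixes f :: "nat \<Rightarrow> real"
  assumes "\<And>e. e > 0 \<Longrightarrow> \<exists>g. convergent g \<and> (\<forall>\<^sub>F n in sequentially. \<bar>f n - g n\<bar> \<le> e)"
  shows "convergent f"
proof -
  have "Cauchy f"
  proof (rule metric_CauchyI)
    fix e :: real assume e: "e > 0"
    then obtain g where g: "convergent g" "\<forall>\<^sub>F n in sequentially. \<bar>f n - g n\<bar> \<le> e/4"
      using assms[of "e/4"] by auto
    from g(1) have "Cauchy g" by (simp add: Cauchy_convergent_iff)
    then obtain M1 where M1: "\<forall>m\<ge>M1. \<forall>n\<ge>M1. dist (g m) (g n) < e/4"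
      using e by (meson metric_CauchyD zero_less_divide_iff zero_less_numeral)
    obtain M2 where M2: "\<forall>n\<ge>M2. \<bar>f n - g n\<bar> \<le> e/4" using g(2) by (auto simp: eventually_sequentially)
    show "\<exists>M. \<forall>m\<ge>M. \<forall>n\<ge>M. dist (f m) (f n) < e"
    proof (intro exI allI impI)
      fix m n assume "max M1 M2 \<le> m" "max M1 M2 \<le> n"
      then have "dist (g m) (g n) < e/4" "\<bar>f n - g n\<bar> \<le> e/4" "\<bar>f m - g m\<bar> \<le> e/4"
        using M1 M2 by auto
      then show "dist (f m) (f n) < e" unfolding dist_real_def dist_real_def by arith
    qed
  qed
  then show ?thesis by (simp add: Cauchy_convergent_iff)
qed

lemma gen_algebra_algebra: "algebra UNIV (gen_algebra G)"
  unfolding gen_algebra_def algebra_iff_Un by auto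

theorem lemma2p5:
  fixes \<B> :: "(nat \<times> cantor) set set"
    and \<S> :: "(nat \<Rightarrow> (nat \<times> cantor) set) set"
    and \<epsilon> :: real
  assumes "countable \<B>" and "admissible_algebra \<B>"
    and "countable \<S>" and "\<S> \<subseteq> Nseq \<B>"
    and "\<epsilon> > 0"
  shows "\<exists>A :: (nat \<times> cantor) set.
           admissible_algebra (gen_algebra (\<B> \<union> {A})) \<and>
           (\<forall>Bs\<in>\<S>. \<exists>k0. \<forall>\<^sub>F n in sequentially. slice (Bs k0) n \<subseteq> slice A n) \<and>
           mu A \<le> \<epsilon>"
proof -
  interpret B: algebra UNIV \<B> using assms(2) by (simp add: admissible_algebra_def)
  have admB: "\<And>C. C \<in> \<B> \<Longrightarrow> admissible C" using assms(2) by (simp add: admissible_algebra_def)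
  have clopB: "\<And>C n. C \<in> \<B> \<Longrightarrow> slice C n \<in> Clop" using admB by (simp add: admissible_def)
  have convB: "\<And>C. C \<in> \<B> \<Longrightarrow> convergent (\<lambda>n. lam (slice C n))" using admB by (simp add: admissible_def)
  obtain s :: "nat \<Rightarrow> nat \<Rightarrow> (nat \<times> cantor) set" where s: "\<And>i. s i \<in> Nseq \<B>" and Ss: "\<S> \<subseteq> range s"
  proof (cases "\<S> = {}")
    case True
    have "(\<lambda>n. lam (slice {} n)) \<longlonglongrightarrow> 0" by (simp add: slice_def lam_def)
    then have "mu {} = 0" unfolding mu_def by (rule limI)
    then have "(\<lambda>k. {}) \<in> Nseq \<B>" unfolding Nseq_def by (auto simp: decseq_def)
    then show ?thesis by (rule that[of "\<lambda>i k. {}"]) (simp add: True)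
  next
    case False
    have 1: "\<And>i. from_nat_into \<S> i \<in> Nseq \<B>" using subsetD[OF assms(4) from_nat_into[OF False]] .
    have 2: "\<S> \<subseteq> range (from_nat_into \<S>)" using assms(3) by (rule subset_range_from_nat_into)
    show ?thesis by (rule that[where s="from_nat_into \<S>", OF 1 2])
  qed
  define \<delta> where "\<delta> i = \<epsilon>/2*(1/2)^i" for i :: nat
  have \<delta>pos: "\<delta> i > 0" for i unfolding \<delta>_def using assms(5) by simp
  have ex: "\<exists>k N. \<forall>n\<ge>N. lam (slice (s i k) n) < \<delta> i" for i
  proof -
    have "(\<lambda>k. mu (s i k)) \<longlonglongrightarrow> 0" using s[of i] by (simp add: Nseq_def)
    then have "\<forall>\<^sub>F k in sequentially. mu (s i k) < \<delta> i" using \<delta>pos by (rule order_tendstoD(2))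
    then obtain k where k: "mu (s i k) < \<delta> i" by (auto simp: eventually_sequentially)
    have "s i k \<in> \<B>" using s[of i] by (simp add: Nseq_def)
    then have "(\<lambda>n. lam (slice (s i k) n)) \<longlonglongrightarrow> mu (s i k)"
      using convB unfolding mu_def by (simp add: convergent_LIMSEQ_iff)
    then have "\<forall>\<^sub>F n in sequentially. lam (slice (s i k) n) < \<delta> i" using k by (rule order_tendstoD(2))
    then show ?thesis by (auto simp: eventually_sequentially)
  qed
  then have "\<forall>i. \<exists>k. \<exists>N. \<forall>n\<ge>N. lam (slice (s i k) n) < \<delta> i" by blast
  then obtain kk where "\<forall>i. \<exists>N. \<forall>n\<ge>N. lam (slice (s i (kk i)) n) < \<delta> i"
    using choice[of "\<lambda>i k. \<exists>N. \<forall>n\<ge>N. lam (slice (s i k) n) < \<delta> i"] by blast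
  then obtain NN where "\<forall>i. \<forall>n\<ge>NN i. lam (slice (s i (kk i)) n) < \<delta> i"
    using choice[of "\<lambda>i N. \<forall>n\<ge>N. lam (slice (s i (kk i)) n) < \<delta> i"] by blast
  then have KN: "\<And>i n. NN i \<le> n \<Longrightarrow> lam (slice (s i (kk i)) n) < \<delta> i" by blast
  define T where "T i = s i (kk i)" for i
  have TB: "T i \<in> \<B>" for i using s[of i] by (simp add: Nseq_def T_def)
  have clopT: "slice (T i) n \<in> Clop" for i n using clopB TB by blast
  have lamT: "NN i \<le> n \<Longrightarrow> lam (slice (T i) n) \<le> \<delta> i" for i n using KN[of i n] by (simp add: T_def)
  define A where "A = {(n,t). \<exists>i. i \<le> n \<and> NN i \<le> n \<and> (n,t) \<in> T i}"
  define I where "I n = {i. i \<le> n \<and> NN i \<le> n}" for n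
  have finI: "finite (I n)" for n unfolding I_def by (rule finite_subset[of _ "{..n}"]) auto
  have sliceA: "slice A n = (\<Union>i\<in>I n. slice (T i) n)" for n
    by (auto simp: A_def slice_def I_def)
  have clopA: "slice A n \<in> Clop" for n unfolding sliceA by (intro clop_UN finI clopT)
  have sumbound: "(\<Sum>i\<in>J. lam (slice (T i) n)) \<le> \<epsilon> * (1/2)^m"
    if "J \<subseteq> I n" "\<forall>i\<in>J. m \<le> i" for J m n
  proof -
    have finJ: "finite J" using that finI finite_subset by blast
    have "(\<Sum>i\<in>J. lam (slice (T i) n)) \<le> (\<Sum>i\<in>J. \<delta> i)"
      by (intro sum_mono lamT) (use that in \<open>auto simp: I_def\<close>)
    also have "\<dots> = \<epsilon>/2 * (\<Sum>i\<in>J. (1/2)^i)" unfolding \<delta>_def by (simp add: sum_distrib_left)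
    also have "\<dots> \<le> \<epsilon>/2 * (2*(1/2)^m)"
      using geom_bound[OF finJ that(2)] assms(5) by (intro mult_left_mono) auto
    finally show ?thesis by simp
  qed
  have lamA: "lam (slice A n) \<le> \<epsilon>" for n
  proof -
    have "lam (slice A n) \<le> (\<Sum>i\<in>I n. lam (slice (T i) n))"
      unfolding sliceA by (intro lam_UN_le finI clopT)
    also have "\<dots> \<le> \<epsilon> * (1/2)^0" by (rule sumbound) auto
    finally show ?thesis by simp
  qed
  define U where "U m = (\<Union>i<m. T i)" for m
  have UB: "U m \<in> \<B>" for m unfolding U_def using TB by (intro B.finite_UN) auto
  have conv: "convergent (\<lambda>n. lam (slice C n \<inter> slice A n))" if C: "C \<in> \<B>" for C
  proof (rule conv_approx)
    fix e :: real assume e: "e > 0"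
    obtain m where m: "(1/2::real)^m < e/\<epsilon>" using real_arch_pow_inv[of "e/\<epsilon>" "1/2"] e assms(5) by auto
    then have me: "\<epsilon> * (1/2)^m \<le> e" using assms(5) by (simp add: field_simps)
    have CU: "C \<inter> U m \<in> \<B>" using C UB by blast
    have sl: "slice (C \<inter> U m) n = slice C n \<inter> slice (U m) n" for n by (auto simp: slice_def)
    have gconv: "convergent (\<lambda>n. lam (slice C n \<inter> slice (U m) n))" using convB[OF CU] by (simp add: sl)
    have ev: "\<forall>\<^sub>F n in sequentially. m \<le> n \<and> (\<forall>i\<in>{..<m}. NN i \<le> n)"
      by (intro eventually_conj eventually_ball_finite) (auto simp: eventually_ge_at_top)
    have "\<forall>\<^sub>F n in sequentially. \<bar>lam (slice C n \<inter> slice A n) - lam (slice C n \<inter> slice (U m) n)\<bar> \<le> e"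
      using ev
    proof (rule eventually_mono)
      fix n assume n: "m \<le> n \<and> (\<forall>i\<in>{..<m}. NN i \<le> n)"
      define R where "R = (\<Union>i\<in>{i\<in>I n. m \<le> i}. slice (T i) n)"
      have sU: "slice (U m) n = (\<Union>i<m. slice (T i) n)" by (auto simp: U_def slice_def)
      have AUR: "slice A n = slice (U m) n \<union> R"
      proof
        show "slice A n \<subseteq> slice (U m) n \<union> R"
        proof
          fix x assume "x \<in> slice A n"
          then obtain i where i: "i \<in> I n" "x \<in> slice (T i) n" unfolding sliceA by blast
          show "x \<in> slice (U m) n \<union> R"
          proof (cases "i < m")
            case True then show ?thesis using i unfolding sU by blast
          next
            case False then show ?thesis using i unfolding R_def by auto
          qed
        qed
        show "slice (U m) n \<union> R \<subseteq> slice A n"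
        proof
          fix x assume "x \<in> slice (U m) n \<union> R"
          then obtain i where i: "i \<in> I n" "x \<in> slice (T i) n"
            unfolding sU R_def using n by (auto simp: I_def) (meson less_imp_le_nat order_trans lessThan_iff)
          then show "x \<in> slice A n" unfolding sliceA by blast
        qed
      qed
      have clopR: "R \<in> Clop" unfolding R_def using finI by (intro clop_UN clopT) auto
      have clopU: "slice (U m) n \<in> Clop" using clopB UB by blast
      have clopC: "slice C n \<in> Clop" using clopB C by blast
      have lamR: "lam R \<le> \<epsilon> * (1/2)^m"
      proof -
        have "lam R \<le> (\<Sum>i\<in>{i\<in>I n. m \<le> i}. lam (slice (T i) n))"
          unfolding R_def using finI by (intro lam_UN_le clopT) auto
        also have "\<dots> \<le> \<epsilon> * (1/2)^m" by (rule sumbound) auto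
        finally show ?thesis .
      qed
      have eq: "slice C n \<inter> slice A n = (slice C n \<inter> slice (U m) n) \<union> (slice C n \<inter> R)"
        unfolding AUR by blast
      have up: "lam (slice C n \<inter> slice A n) \<le> lam (slice C n \<inter> slice (U m) n) + lam (slice C n \<inter> R)"
        unfolding eq using clopC clopU clopR by (intro lam_Un_le clop_Int)
      have r: "lam (slice C n \<inter> R) \<le> lam R" using clopR by (intro lam_mono) auto
      have lo: "lam (slice C n \<inter> slice (U m) n) \<le> lam (slice C n \<inter> slice A n)"
        using lam_mono[OF _ clop_Int[OF clopC clopA[of n]]] by (simp add: AUR Int_Un_distrib)
      show "\<bar>lam (slice C n \<inter> slice A n) - lam (slice C n \<inter> slice (U m) n)\<bar> \<le> e"
        using up r lo lamR me by linarith
    qed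
    then show "\<exists>g. convergent g \<and> (\<forall>\<^sub>F n in sequentially. \<bar>lam (slice C n \<inter> slice A n) - g n\<bar> \<le> e)"
      using gconv by blast
  qed
  define M0 where "M0 = {(C \<inter> A) \<union> (D - A) | C D. C \<in> \<B> \<and> D \<in> \<B>}"
  have M0I: "(C \<inter> A) \<union> (D - A) \<in> M0" if "C \<in> \<B>" "D \<in> \<B>" for C D
    unfolding M0_def using that by blast
  have algM0: "algebra UNIV M0"
    unfolding algebra_iff_Un
  proof (intro conjI ballI)
    show "M0 \<subseteq> Pow UNIV" by simp
    have "{} = ({} \<inter> A) \<union> ({} - A)" by simp
    then show "{} \<in> M0" using M0I[of "{}" "{}"] by simp
  next
    fix a assume "a \<in> M0"
    then obtain C D where CD: "C \<in> \<B>" "D \<in> \<B>" "a = (C \<inter> A) \<union> (D - A)" unfolding M0_def by blast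
    then have "UNIV - a = ((UNIV - C) \<inter> A) \<union> ((UNIV - D) - A)" by blast
    moreover have "UNIV - C \<in> \<B>" "UNIV - D \<in> \<B>" using CD by auto
    ultimately show "UNIV - a \<in> M0" using M0I[of "UNIV - C" "UNIV - D"] by simp
  next
    fix a b assume "a \<in> M0" "b \<in> M0"
    then obtain C D C' D' where CD: "C \<in> \<B>" "D \<in> \<B>" "a = (C \<inter> A) \<union> (D - A)"
      "C' \<in> \<B>" "D' \<in> \<B>" "b = (C' \<inter> A) \<union> (D' - A)" unfolding M0_def by blast
    then have "a \<union> b = ((C \<union> C') \<inter> A) \<union> ((D \<union> D') - A)" by blast
    moreover have "C \<union> C' \<in> \<B>" "D \<union> D' \<in> \<B>" using CD by auto
    ultimately show "a \<union> b \<in> M0" using M0I[of "C \<union> C'" "D \<union> D'"] by simp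
  qed
  have sub: "\<B> \<union> {A} \<subseteq> M0"
  proof
    fix x assume "x \<in> \<B> \<union> {A}"
    then show "x \<in> M0"
    proof
      assume "x \<in> \<B>"
      moreover have "x \<inter> A \<union> (x - A) = x" by blast
      ultimately show ?thesis using M0I[of x x] by simp
    next
      assume "x \<in> {A}"
      then have "x = (UNIV \<inter> A) \<union> ({} - A)" by simp
      then show ?thesis using M0I[of UNIV "{}"] by simp
    qed
  qed
  have genM0: "gen_algebra (\<B> \<union> {A}) \<subseteq> M0"
    unfolding gen_algebra_def using algM0 sub by (intro Inter_lower) simp
  have admM0: "admissible x" if "x \<in> M0" for x
  proof -
    obtain C D where CD: "C \<in> \<B>" "D \<in> \<B>" "x = (C \<inter> A) \<union> (D - A)" using \<open>x \<in> M0\<close> unfolding M0_def by blast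
    have sl: "slice x n = (slice C n \<inter> slice A n) \<union> (slice D n - slice A n)" for n
      using CD(3) by (auto simp: slice_def)
    have "slice x n \<in> Clop" for n unfolding sl using clopB CD clopA by (intro clop_Un clop_Int clop_Diff)
    moreover have "lam (slice x n) = lam (slice C n \<inter> slice A n) + lam (slice D n) - lam (slice D n \<inter> slice A n)" for n
      unfolding sl using clopB CD clopA by (intro lam_split)
    moreover have "convergent (\<lambda>n. lam (slice C n \<inter> slice A n) + lam (slice D n) - lam (slice D n \<inter> slice A n))"
      using conv[OF CD(1)] conv[OF CD(2)] convB[OF CD(2)] by (intro convergent_diff convergent_add)
    ultimately show ?thesis unfolding admissible_def by simp
  qed
  have P1: "admissible_algebra (gen_algebra (\<B> \<union> {A}))"
    unfolding admissible_algebra_def using gen_algebra_algebra genM0 admM0 by blast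
  have P2: "\<forall>Bs\<in>\<S>. \<exists>k0. \<forall>\<^sub>F n in sequentially. slice (Bs k0) n \<subseteq> slice A n"
  proof
    fix Bs assume "Bs \<in> \<S>"
    then obtain i where i: "Bs = s i" using Ss by blast
    have "\<forall>\<^sub>F n in sequentially. slice (Bs (kk i)) n \<subseteq> slice A n"
      unfolding eventually_sequentially
    proof (intro exI allI impI)
      fix n assume "max i (NN i) \<le> n"
      then show "slice (Bs (kk i)) n \<subseteq> slice A n" unfolding sliceA i by (auto simp: I_def T_def)
    qed
    then show "\<exists>k0. \<forall>\<^sub>F n in sequentially. slice (Bs k0) n \<subseteq> slice A n" by blast
  qed
  have P3: "mu A \<le> \<epsilon>"
  proof -
    have "UNIV \<in> \<B>" by simp
    from conv[OF this] have "convergent (\<lambda>n. lam (slice A n))" by (simp add: slice_def)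
    then have "(\<lambda>n. lam (slice A n)) \<longlonglongrightarrow> mu A" unfolding mu_def by (simp add: convergent_LIMSEQ_iff)
    then show ?thesis using lamA by (intro LIMSEQ_le_const2) auto
  qed
  show ?thesis using P1 P2 P3 by blast
qed

end
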